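(* In the standing setting below, let $(u,v)$ be a bounded, decaying, optimal integrable positive solution and suppose $p\frac{n-\beta\gamma}{\gamma-1}-\sigma_2>n$. Then $v(x)\simeq|x|^{-\frac{n-\beta\gamma}{\gamma-1}}$.
   Context: Standing setting: $n\ge3$, $\beta>0$, $\gamma>1$, $\beta\gamma<n$, $p,q>0$ with $q\ge p$, $pq>(\gamma-1)^2$, $\sigma_1,\sigma_2\in(-\beta\gamma,\infty)$ with $\sigma_1\le\sigma_2$, $q_0+p_0\le\frac{n-\beta\gamma}{\gamma-1}$ where $q_0=\frac{\beta\gamma(\gamma-1+q)+(\gamma-1)\sigma_1+\sigma_2 q}{pq-(\gamma-1)^2}$, $p_0=\frac{\beta\gamma(\gamma-1+p)+(\gamma-1)\sigma_2+\sigma_1 p}{pq-(\gamma-1)^2}$; $c_1,c_2$ are double bounded (i.e. $1/C\le c_i(x)\le C$ for some $C>0$), and $(u,v)$ is a positive solution (nonnegative $L^1_{loc}$ functions, positive, satisfying the equations a.e.) of $u(x)=c_1(x)W_{\beta,\gamma}(|y|^{\sigma_1}v^q)(x)$, $v(x)=c_2(x)W_{\beta,\gamma}(|y|^{\sigma_2}u^p)(x)$, where $W_{\beta,\gamma}(f)(x)=\int_0^\infty\Big(\frac{\int_{B_t(x)}f(y)\,dy}{t^{n-\beta\gamma}}\Big)^{\frac{1}{\gamma-1}}\frac{dt}{t}$. For positive $f$, $f(x)\simeq g(x)$ means $1/c\le f(x)/g(x)\le c$ for some $c>0$ and all sufficiently large $|x|$; decaying means $u\simeq|x|^{-\theta_1}$,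 $v\simeq|x|^{-\theta_2}$ for some $\theta_1,\theta_2>0$. Optimal integrable means $(u,v)\in L^r\times L^s$ for all $r>\frac{n(\gamma-1)}{n-\beta\gamma}$ and $s>\max\big\{\frac{n(\gamma-1)}{n-\beta\gamma},\frac{n(\gamma-1)}{p\frac{n-\beta\gamma}{\gamma-1}-(\beta\gamma+\sigma_2)}\big\}$. *)

theory Defs
  imports "HOL-Analysis.Analysis"
begin

text \<open>The outer integral is a nonnegative (ennreal-valued) Lebesgue integral, so it may be infinite.\<close>
definition wolff :: "real \<Rightarrow> real \<Rightarrow> (real^'n \<Rightarrow> real) \<Rightarrow> real^'n \<Rightarrow> ennreal" where
  "wolff \<beta> \<gamma> f x =
     (\<integral>\<^sup>+ t \<in> {0<..}.
        ennreal (((LINT y : ball x t | lborel. f y) / t powr (real CARD('n) - \<beta> * \<gamma>))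
                   powr (1 / (\<gamma> - 1)) / t) \<partial>lborel)"

definition loc_integrable :: "(real^'n \<Rightarrow> real) \<Rightarrow> bool" where
  "loc_integrable f \<longleftrightarrow> (\<forall>K. compact K \<longrightarrow> set_integrable lborel K f)"

definition double_bounded :: "('a \<Rightarrow> real) \<Rightarrow> bool" where
  "double_bounded c \<longleftrightarrow> (\<exists>C>0. \<forall>x. 1 / C \<le> c x \<and> c x \<le> C)"

definition asym_equiv :: "(real^'n \<Rightarrow> real) \<Rightarrow> (real^'n \<Rightarrow> real) \<Rightarrow> bool" where
  "asym_equiv f g \<longleftrightarrow> (\<exists>c>0. \<exists>R. \<forall>x. norm x \<ge> R \<longrightarrow> 1 / c \<le> f x / g x \<and> f x / g x \<le> c)"

definition positive_solution ::
  "real \<Rightarrow> real \<Rightarrow> real \<Rightarrow> real \<Rightarrow> real \<Rightarrow> real \<Rightarrow> (real^'n \<Rightarrow> real) \<Rightarrow> (real^'n \<Rightarrow> real)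
   \<Rightarrow> (real^'n \<Rightarrow> real) \<Rightarrow> (real^'n \<Rightarrow> real) \<Rightarrow> bool" where
  "positive_solution \<beta> \<gamma> p q \<sigma>1 \<sigma>2 c1 c2 u v \<longleftrightarrow>
     (\<forall>x. u x > 0) \<and> (\<forall>x. v x > 0) \<and> loc_integrable u \<and> loc_integrable v \<and>
     (AE x in lborel. ennreal (u x) = ennreal (c1 x) * wolff \<beta> \<gamma> (\<lambda>y. norm y powr \<sigma>1 * v y powr q) x) \<and>
     (AE x in lborel. ennreal (v x) = ennreal (c2 x) * wolff \<beta> \<gamma> (\<lambda>y. norm y powr \<sigma>2 * u y powr p) x)"

end

theory Submission
  imports Defs
begin

lemma ennreal_term_le_suminf: "(f k :: ennreal) \<le> (\<Sum>i. f i)"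
  using sum_le_suminf[of f "{k}"] by (auto simp: summableI)

lemma norm_powr_integrable_cball:
  fixes b \<rho> :: real
  assumes b0: "b \<le> 0" and bD: "b > - real DIM('a)" and \<rho>: "\<rho> > 0"
  shows "set_integrable lborel (cball (0::'a::euclidean_space) \<rho>) (\<lambda>y. norm y powr b)"
proof -
  define D where "D = DIM('a)"
  define V where "V = unit_ball_vol (real D)"
  define r where "r k = \<rho> * 2 powr (- real k)" for k :: nat
  have rpos: "r k > 0" for k using \<rho> by (simp add: r_def)
  define g where "g k y = ennreal ((r (Suc k)) powr b) * indicator (cball (0::'a) (r k)) y" for k y
  have pt: "ennreal (indicator (cball 0 \<rho>) y * norm y powr b) \<le> (\<Sum>k. g k y)" for y :: 'a
  proof (cases "y \<in> cball 0 \<rho> \<and> y \<noteq> 0")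
    case False
    then show ?thesis by (auto simp: indicator_def)
  next
    case True
    then have ny: "norm y > 0" "norm y \<le> \<rho>" by auto
    have "\<exists>k. r (Suc k) < norm y"
    proof -
      obtain k where "(1/2::real) ^ k < norm y / \<rho>"
        using real_arch_pow_inv[of "norm y / \<rho>" "1/2"] ny \<rho> by auto
      then have "r k < norm y" using \<rho>
        by (simp add: r_def powr_minus powr_realpow field_simps power_divide)
      moreover have "r (Suc k) \<le> r k" using \<rho> by (simp add: r_def)
      ultimately show ?thesis by (intro exI[of _ k]) linarith
    qed
    define k where "k = (LEAST k. r (Suc k) < norm y)"
    have k1: "r (Suc k) < norm y" unfolding k_def by (rule LeastI_ex) fact
    have k2: "norm y \<le> r k"
    proof (cases k)
      case 0 then show ?thesis using ny by (simp add: r_def)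
    next
      case (Suc j)
      have "\<not> r (Suc j) < norm y" using not_less_Least[of j "\<lambda>k. r (Suc k) < norm y"]
        unfolding k_def[symmetric] using Suc by simp
      then show ?thesis using Suc by simp
    qed
    have "norm y powr b \<le> r (Suc k) powr b" using powr_mono2'[OF b0 rpos k1[THEN less_imp_le]] .
    then have "ennreal (indicator (cball 0 \<rho>) y * norm y powr b) \<le> g k y"
      using True k2 by (simp add: g_def indicator_def)
    also have "\<dots> \<le> (\<Sum>k. g k y)" by (rule ennreal_term_le_suminf)
    finally show ?thesis .
  qed
  define q where "q = 2 powr (- (b + real D))"
  define C where "C = V * \<rho> powr (b + real D) * 2 powr (-b)"
  have q: "q \<ge> 0" "q < 1"
    using bD powr_less_mono[of "- (b + real D)" 0 2] by (auto simp: q_def D_def)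
  have gint: "integral\<^sup>N lborel (g k) = ennreal (C * q ^ k)" for k
  proof -
    have "integral\<^sup>N lborel (g k) = ennreal ((r (Suc k)) powr b) * emeasure lborel (cball (0::'a) (r k))"
      unfolding g_def by (simp add: nn_integral_cmult_indicator)
    also have "\<dots> = ennreal ((r (Suc k)) powr b * (V * r k ^ D))"
      using rpos[of k] by (simp add: emeasure_cball V_def D_def ennreal_mult)
    also have "(r (Suc k)) powr b * (V * r k ^ D) = C * q ^ k"
    proof -
      have "r k ^ D = r k powr real D" using rpos[of k] by (simp add: powr_realpow)
      then have "(r (Suc k)) powr b * (V * r k ^ D) =
          V * (\<rho> powr b * 2 powr (- real (Suc k) * b)) * (\<rho> powr real D * 2 powr (- real k * real D))"
        using \<rho> by (simp add: r_def powr_mult powr_powr)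
      also have "\<dots> = V * \<rho> powr (b + real D) * 2 powr (-b) * 2 powr (- (b + real D) * real k)"
        by (simp add: powr_add[symmetric] algebra_simps)
      also have "2 powr (- (b + real D) * real k) = q ^ k"
        by (simp add: q_def powr_powr[symmetric] powr_realpow)
      finally show ?thesis by (simp add: C_def)
    qed
    finally show ?thesis .
  qed
  have Cnn: "C \<ge> 0" by (simp add: C_def V_def)
  have sums: "(\<lambda>k. C * q ^ k) sums (C / (1 - q))"
    using sums_mult[OF geometric_sums[of q] , of C] q by (simp add: divide_simps)
  have gm: "g k \<in> borel_measurable lborel" for k
    unfolding g_def by (intro borel_measurable_times_ennreal borel_measurable_const borel_measurable_indicator) auto
  have "(\<integral>\<^sup>+ y. ennreal (norm (indicator (cball (0::'a) \<rho>) y *\<^sub>R norm y powr b)) \<partial>lborel)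
      \<le> (\<integral>\<^sup>+ y. (\<Sum>k. g k y) \<partial>lborel)"
  proof (rule nn_integral_mono)
    fix y :: 'a assume "y \<in> space lborel"
    have "norm (indicator (cball 0 \<rho>) y *\<^sub>R norm y powr b) = indicator (cball 0 \<rho>) y * norm y powr b"
      by (simp add: indicator_def)
    then show "ennreal (norm (indicator (cball 0 \<rho>) y *\<^sub>R norm y powr b)) \<le> (\<Sum>k. g k y)"
      using pt[of y] by simp
  qed
  also have "\<dots> = (\<Sum>k. integral\<^sup>N lborel (g k))"
    by (rule nn_integral_suminf[OF gm])
  also have "\<dots> = ennreal (C / (1 - q))"
    unfolding gint by (rule suminf_ennreal_eq[OF _ sums]) (use Cnn q in auto)
  finally have fin: "(\<integral>\<^sup>+ y. ennreal (norm (indicator (cball (0::'a) \<rho>) y *\<^sub>R norm y powr b)) \<partial>lborel) < \<infinity>"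
    by (rule le_less_trans) simp
  show ?thesis unfolding set_integrable_def
    by (rule integrableI_bounded[OF _ fin])
      (intro borel_measurable_scaleR borel_measurable_indicator powr_real_measurable
         borel_measurable_norm measurable_ident_sets borel_measurable_const; simp)
qed

lemma measurable_from_loc:
  fixes u :: "'a::euclidean_space \<Rightarrow> real"
  assumes "\<forall>K. compact K \<longrightarrow> set_integrable lborel K u"
  shows "u \<in> borel_measurable lborel"
proof (rule borel_measurable_LIMSEQ_real)
  show "(\<lambda>i. indicator (cball 0 (real i)) x *\<^sub>R u x) \<longlonglongrightarrow> u x" for x
  proof (rule tendsto_eventually)
    obtain N :: nat where "norm x \<le> real N" using real_arch_simple by blast
    then show "\<forall>\<^sub>F i in sequentially. indicator (cball 0 (real i)) x *\<^sub>R u x = u x"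
      by (intro eventually_sequentiallyI[of N]) (auto simp: indicator_def)
  qed
  show "(\<lambda>x. indicator (cball 0 (real i)) x *\<^sub>R u x) \<in> borel_measurable lborel" for i
    using assms compact_cball[of "0::'a" "real i"] unfolding set_integrable_def
    by (blast intro: borel_measurable_integrable)
qed

lemma ae_exists:
  assumes "AE x in lborel. P x" "S \<in> sets lborel" "emeasure lborel S \<noteq> 0"
  shows "\<exists>x\<in>S. P x"
proof (rule ccontr)
  assume "\<not> (\<exists>x\<in>S. P x)"
  from assms(1) obtain N where N: "{x \<in> space lborel. \<not> P x} \<subseteq> N" "emeasure lborel N = 0" "N \<in> sets lborel"
    by (rule AE_E)
  have "S \<subseteq> N" using N(1) \<open>\<not> (\<exists>x\<in>S. P x)\<close> by auto
  then have "emeasure lborel S \<le> emeasure lborel N" by (rule emeasure_mono) fact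
  with N(2) assms(3) show False by simp
qed

lemma powr_integrable_ball:
  fixes u :: "'a::euclidean_space \<Rightarrow> real"
  assumes um: "u \<in> borel_measurable lborel" and upos: "\<And>y. u y > 0" and uM: "\<And>y. u y \<le> M"
    and p: "p > 0" and \<sigma>: "\<sigma> > - real DIM('a)"
  shows "set_integrable lborel (ball x t) (\<lambda>y. norm y powr \<sigma> * u y powr p)"
proof -
  define \<rho> where "\<rho> = norm x + \<bar>t\<bar> + 1"
  define b where "b = min \<sigma> 0"
  define K where "K = M powr p * max 1 (\<rho> powr \<sigma>)"
  have \<rho>: "\<rho> > 0" by (simp add: \<rho>_def add_nonneg_pos)
  have "set_integrable lborel (cball (0::'a) \<rho>) (\<lambda>y. norm y powr b)"
    by (rule norm_powr_integrable_cball) (use \<sigma> \<rho> in \<open>auto simp: b_def\<close>)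
  then have I: "set_integrable lborel (cball (0::'a) \<rho>) (\<lambda>y. K * norm y powr b)"
    by (rule set_integrable_mult_right)
  show ?thesis unfolding set_integrable_def
  proof (rule Bochner_Integration.integrable_bound[OF I[unfolded set_integrable_def]])
    show "(\<lambda>y. indicator (ball x t) y *\<^sub>R (norm y powr \<sigma> * u y powr p)) \<in> borel_measurable lborel"
      by (intro borel_measurable_scaleR borel_measurable_indicator borel_measurable_times
          powr_real_measurable borel_measurable_norm measurable_ident_sets borel_measurable_const um; simp)
    show "AE y in lborel. norm (indicator (ball x t) y *\<^sub>R (norm y powr \<sigma> * u y powr p))
            \<le> norm (indicator (cball 0 \<rho>) y *\<^sub>R (K * norm y powr b))"
    proof (rule AE_I2)
      fix y :: 'a
      show "norm (indicator (ball x t) y *\<^sub>R (norm y powr \<sigma> * u y powr p))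
            \<le> norm (indicator (cball 0 \<rho>) y *\<^sub>R (K * norm y powr b))"
      proof (cases "y \<in> ball x t \<and> y \<noteq> 0")
        case False
        then show ?thesis by (auto simp: indicator_def)
      next
        case True
        then have yb: "norm y < \<rho>" "norm y > 0"
          using norm_triangle_ineq2[of y x] by (auto simp: \<rho>_def dist_norm norm_minus_commute)
        then have yc: "y \<in> cball 0 \<rho>" by simp
        have up: "u y powr p \<le> M powr p" using uM upos p by (intro powr_mono2) (auto intro: less_imp_le)
        have up0: "u y powr p \<ge> 0" by simp
        have ns: "norm y powr \<sigma> \<le> max 1 (\<rho> powr \<sigma>) * norm y powr b"
        proof (cases "\<sigma> < 0")
          case True
          have "1 * norm y powr \<sigma> \<le> max 1 (\<rho> powr \<sigma>) * norm y powr \<sigma>"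
            by (intro mult_right_mono) auto
          then show ?thesis using True by (simp add: b_def)
        next
          case False
          then have "norm y powr \<sigma> \<le> \<rho> powr \<sigma>" using yb by (intro powr_mono2) auto
          then show ?thesis using False yb by (simp add: b_def)
        qed
        have "norm y powr \<sigma> * u y powr p \<le> (max 1 (\<rho> powr \<sigma>) * norm y powr b) * M powr p"
          using ns up up0 by (intro mult_mono) auto
        then have "norm y powr \<sigma> * u y powr p \<le> K * norm y powr b"
          by (simp add: K_def algebra_simps)
        moreover have "0 \<le> K * norm y powr b" by (simp add: K_def)
        ultimately show ?thesis using True yc by (simp add: indicator_def)
      qed
    qed
  qed
qed

lemma wolff_lower:
  fixes f :: "real^'n \<Rightarrow> real"
  assumes f0: "\<And>y. f y \<ge> 0" and fpos: "\<And>y. y \<noteq> 0 \<Longrightarrow> f y > 0"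
    and fint: "\<And>x t. set_integrable lborel (ball x t) f"
    and \<gamma>: "\<gamma> > 1" and \<beta>\<gamma>: "\<beta> * \<gamma> < real CARD('n)"
  shows "\<exists>K>0. \<forall>x. ennreal (K * (norm x + 1) powr (- ((real CARD('n) - \<beta> * \<gamma>) / (\<gamma> - 1))))
                    \<le> wolff \<beta> \<gamma> f x"
proof -
  define a where "a = real CARD('n) - \<beta> * \<gamma>"
  define e where "e = 1 / (\<gamma> - 1)"
  define \<theta> where "\<theta> = a / (\<gamma> - 1)"
  have a: "a > 0" using \<beta>\<gamma> by (simp add: a_def)
  have e: "e > 0" using \<gamma> by (simp add: e_def)
  have \<theta>: "\<theta> = a * e" by (simp add: \<theta>_def e_def)
  define m where "m = (LINT y : ball (0::real^'n) 1 | lborel. f y)"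
  have m0: "m \<ge> 0" unfolding m_def set_lebesgue_integral_def
    by (intro integral_nonneg_AE AE_I2) (simp add: f0)
  have "m \<noteq> 0"
  proof
    assume "m = 0"
    then have "AE y in lborel. indicator (ball (0::real^'n) 1) y *\<^sub>R f y = 0"
      using integral_nonneg_eq_0_iff_AE[of lborel "\<lambda>y. indicator (ball (0::real^'n) 1) y *\<^sub>R f y"]
        fint[of 0 1] f0 unfolding m_def set_lebesgue_integral_def set_integrable_def
      by auto
    moreover have "ball (0::real^'n) 1 - {0} \<in> sets lborel" by auto
    moreover have "emeasure lborel (ball (0::real^'n) 1 - {0}) \<noteq> 0"
    proof -
      have V: "unit_ball_vol (real CARD('n)) \<noteq> 0"
        by (metis less_irrefl of_nat_0_le_iff unit_ball_vol_pos)
      show ?thesis by (subst emeasure_Diff_null_set) (auto simp: emeasure_ball V)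
    qed
    ultimately obtain y where "y \<in> ball (0::real^'n) 1 - {0}" "indicator (ball (0::real^'n) 1) y *\<^sub>R f y = 0"
      using ae_exists by blast
    with fpos[of y] show False by auto
  qed
  with m0 have m: "m > 0" by simp
  define K where "K = m powr e * 2 powr (- \<theta>) / 2"
  have K: "K > 0" using m by (simp add: K_def)
  have "ennreal (K * (norm x + 1) powr (- \<theta>)) \<le> wolff \<beta> \<gamma> f x" for x
  proof -
    define T where "T = norm x + 1"
    have T: "T > 0" "T \<ge> 1" unfolding T_def using norm_ge_zero[of x] by linarith+
    define c where "c = (m / (2*T) powr a) powr e / (2*T)"
    have pt: "ennreal c * indicator {T..2*T} t \<le>
        ennreal (((LINT y : ball x t | lborel. f y) / t powr a) powr e / t) * indicator {0<..} t" for t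
    proof (cases "t \<in> {T..2*T}")
      case False then show ?thesis by simp
    next
      case True
      then have t: "t > 0" "T \<le> t" "t \<le> 2*T" using T by auto
      define L where "L = (LINT y : ball x t | lborel. f y)"
      have "m \<le> L" unfolding m_def L_def set_lebesgue_integral_def
      proof (rule integral_mono)
        show "integrable lborel (\<lambda>y. indicator (ball (0::real^'n) 1) y *\<^sub>R f y)"
          using fint[of 0 1] by (simp add: set_integrable_def)
        show "integrable lborel (\<lambda>y. indicator (ball x t) y *\<^sub>R f y)"
          using fint[of x t] by (simp add: set_integrable_def)
        fix y :: "real^'n"
        have "y \<in> ball 0 1 \<Longrightarrow> y \<in> ball x t"
          using norm_triangle_ineq[of x "-y"] t by (auto simp: T_def dist_norm)
        then show "indicator (ball (0::real^'n) 1) y *\<^sub>R f y \<le> indicator (ball x t) y *\<^sub>R f y"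
          using f0[of y] by (auto simp: indicator_def)
      qed
      have tp: "t powr a \<le> (2*T) powr a" using t a by (intro powr_mono2) auto
      have "m / (2*T) powr a \<le> L / t powr a"
        by (rule frac_le) (use m \<open>m \<le> L\<close> tp t in auto)
      then have pe: "(m / (2*T) powr a) powr e \<le> (L / t powr a) powr e"
        using m T e by (intro powr_mono2) auto
      have "c \<le> (L / t powr a) powr e / t"
        unfolding c_def by (rule frac_le[OF _ pe]) (use t in auto)
      then show ?thesis using True t by (simp add: L_def)
    qed
    have "ennreal (c * T) = ennreal c * emeasure lborel {T..2*T}"
      using T by (simp add: ennreal_mult[symmetric] c_def)
    also have "\<dots> = (\<integral>\<^sup>+ t. ennreal c * indicator {T..2*T} t \<partial>lborel)"
      by (simp add: nn_integral_cmult_indicator)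
    also have "\<dots> \<le> wolff \<beta> \<gamma> f x"
      unfolding wolff_def a_def[symmetric] e_def[symmetric] by (rule nn_integral_mono) (rule pt)
    finally have le: "ennreal (c * T) \<le> wolff \<beta> \<gamma> f x" .
    have "c * T = K * T powr (- \<theta>)"
    proof -
      have "(m / (2*T) powr a) powr e = m powr e / (2*T) powr \<theta>"
        using m T by (simp add: powr_divide powr_powr \<theta>)
      then have "c * T = m powr e / (2 powr \<theta> * T powr \<theta>) / 2"
        using T by (simp add: c_def powr_mult field_simps)
      then show ?thesis using T by (simp add: K_def powr_minus field_simps)
    qed
    with le show ?thesis by (simp add: T_def)
  qed
  then show ?thesis using K unfolding \<theta>_def a_def by blast
qed

lemma decay_integrable:
  fixes v :: "real^'n \<Rightarrow> real"
  assumes vpos: "\<And>x. v x > 0" and c: "c > 0"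
    and low: "\<And>x. norm x \<ge> R \<Longrightarrow> 1 / c \<le> v x / norm x powr (- \<theta>)"
    and \<theta>: "\<theta> > 0" and s: "s > 0" and int: "integrable lborel (\<lambda>x. v x powr s)"
  shows "\<theta> * s \<ge> real CARD('n)"
proof (rule ccontr)
  assume "\<not> \<theta> * s \<ge> real CARD('n)"
  define a where "a = \<theta> * s"
  define N where "N = CARD('n)"
  have aN: "a < real N" "a > 0" using \<open>\<not> _\<close> \<theta> s by (auto simp: a_def N_def)
  define R' where "R' = max R 1"
  define k where "k = c powr (- s)"
  have k: "k > 0" using c by (simp add: k_def)
  have vlow: "v x powr s \<ge> k * norm x powr (- a)" if "norm x \<ge> R'" for x
  proof -
    have nx: "norm x > 0" "norm x \<ge> R" using that by (auto simp: R'_def)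
    have "1 / c \<le> v x / norm x powr (- \<theta>)" using low nx by simp
    then have "(1/c) * norm x powr (- \<theta>) \<le> v x"
      using nx by (simp add: pos_le_divide_eq)
    then have "((1/c) * norm x powr (- \<theta>)) powr s \<le> v x powr s"
      using c s by (intro powr_mono2) auto
    also have "((1/c) * norm x powr (- \<theta>)) powr s = k * norm x powr (- a)"
      using c nx by (simp add: powr_mult powr_powr k_def a_def powr_divide powr_minus_divide)
    finally show ?thesis .
  qed
  define V where "V = unit_ball_vol (real N)"
  have V: "V > 0" unfolding V_def by (metis of_nat_0_le_iff unit_ball_vol_pos)
  define Q where "Q = k * V * (1 - (1/2)^N)"
  have Q: "Q > 0" using k V by (simp add: Q_def power_less_one_iff N_def)
  define I where "I = integral\<^sup>L lborel (\<lambda>x. v x powr s)"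
  define T where "T = max (2 * R') ((I / Q + 1) powr (1 / (real N - a)))"
  have T: "T \<ge> 2 * R'" "T > 0" using aN by (auto simp: T_def R'_def)
  have "T powr (real N - a) \<ge> ((I / Q + 1) powr (1 / (real N - a))) powr (real N - a)"
    using aN by (intro powr_mono2) (auto simp: T_def)
  also have "((I / Q + 1) powr (1 / (real N - a))) powr (real N - a) = I / Q + 1"
  proof -
    have "I \<ge> 0" unfolding I_def by (intro integral_nonneg_AE AE_I2) simp
    then show ?thesis using aN Q by (simp add: powr_powr)
  qed
  finally have TI: "Q * T powr (real N - a) > I" using Q by (simp add: field_simps)
  define A where "A = ball (0::real^'n) T - ball 0 (T/2)"
  have Ameas: "emeasure lborel A = ennreal (V * T ^ N * (1 - (1/2)^N))"
  proof -
    have "emeasure lborel A = emeasure lborel (ball (0::real^'n) T) - emeasure lborel (ball (0::real^'n) (T/2))"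
      unfolding A_def
    proof (rule emeasure_Diff)
      show "emeasure lborel (ball (0::real^'n) (T/2)) \<noteq> \<infinity>"
        using emeasure_lborel_ball_finite[of "0::real^'n" "T/2"] by simp
      show "ball (0::real^'n) (T/2) \<subseteq> ball 0 T" using T by auto
    qed auto
    also have "\<dots> = ennreal (V * T ^ N) - ennreal (V * (T/2) ^ N)"
      using T by (simp add: emeasure_ball V_def N_def)
    also have "\<dots> = ennreal (V * T ^ N * (1 - (1/2)^N))"
      using V T by (subst ennreal_minus) (auto simp: power_divide field_simps)
    finally show ?thesis .
  qed
  have "ennreal (Q * T powr (real N - a)) = ennreal (k * T powr (- a)) * emeasure lborel A"
  proof -
    have "Q * T powr (real N - a) = (k * T powr (- a)) * (V * T ^ N * (1 - (1/2)^N))"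
      using T by (simp add: Q_def powr_diff powr_minus powr_realpow field_simps)
    then show ?thesis using Ameas k T V
      by (simp add: ennreal_mult[symmetric] power_le_one)
  qed
  also have "\<dots> = (\<integral>\<^sup>+ x. ennreal (k * T powr (- a)) * indicator A x \<partial>lborel)"
    by (simp add: nn_integral_cmult_indicator A_def)
  also have "\<dots> \<le> (\<integral>\<^sup>+ x. ennreal (v x powr s) \<partial>lborel)"
  proof (rule nn_integral_mono)
    fix x :: "real^'n" assume "x \<in> space lborel"
    show "ennreal (k * T powr (- a)) * indicator A x \<le> ennreal (v x powr s)"
    proof (cases "x \<in> A")
      case True
      then have nx: "norm x \<ge> T/2" "norm x < T" by (auto simp: A_def)
      then have "norm x \<ge> R'" using T by simp
      then have "k * norm x powr (- a) \<le> v x powr s" by (rule vlow)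
      moreover have "T powr (- a) \<le> norm x powr (- a)"
        using nx T aN by (intro powr_mono2') auto
      ultimately have "k * T powr (- a) \<le> v x powr s"
        using k by (meson mult_left_mono less_imp_le order_trans)
      then show ?thesis using True by simp
    qed simp
  qed
  also have "\<dots> = ennreal I"
    unfolding I_def by (rule nn_integral_eq_integral[OF int]) simp
  finally have "Q * T powr (real N - a) \<le> I"
    by (subst (asm) ennreal_le_iff) (auto simp: I_def intro!: integral_nonneg_AE)
  with TI show False by simp
qed

theorem proposition6:
  fixes u v c1 c2 :: "real^'n \<Rightarrow> real"
    and \<beta> \<gamma> p q \<sigma>1 \<sigma>2 :: real
  defines "n \<equiv> real CARD('n)"
  defines "q0 \<equiv> (\<beta>*\<gamma>*(\<gamma>-1+q) + (\<gamma>-1)*\<sigma>1 + \<sigma>2*q) / (p*q - (\<gamma>-1)^2)"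
  defines "p0 \<equiv> (\<beta>*\<gamma>*(\<gamma>-1+p) + (\<gamma>-1)*\<sigma>2 + \<sigma>1*p) / (p*q - (\<gamma>-1)^2)"
  assumes n3: "CARD('n) \<ge> 3"
    and "\<beta> > 0" and "\<gamma> > 1" and "\<beta> * \<gamma> < n"
    and "p > 0" and "q > 0" and "q \<ge> p" and "p * q > (\<gamma> - 1)^2"
    and "\<sigma>1 > - (\<beta> * \<gamma>)" and "\<sigma>2 > - (\<beta> * \<gamma>)" and "\<sigma>1 \<le> \<sigma>2"
    and "q0 + p0 \<le> (n - \<beta> * \<gamma>) / (\<gamma> - 1)"
    and "double_bounded c1" and "double_bounded c2"
    and sol: "positive_solution \<beta> \<gamma> p q \<sigma>1 \<sigma>2 c1 c2 u v"
    and bounded: "\<exists>M. \<forall>x. u x \<le> M \<and> v x \<le> M"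
    and decaying: "\<exists>\<theta>1>0. \<exists>\<theta>2>0. asym_equiv u (\<lambda>x. norm x powr (-\<theta>1)) \<and>
                                   asym_equiv v (\<lambda>x. norm x powr (-\<theta>2))"
    and opt_int:
      "\<forall>r. r > n * (\<gamma> - 1) / (n - \<beta> * \<gamma>) \<longrightarrow> integrable lborel (\<lambda>x. u x powr r)"
      "\<forall>s. s > max (n * (\<gamma> - 1) / (n - \<beta> * \<gamma>))
                    (n * (\<gamma> - 1) / (p * (n - \<beta> * \<gamma>) / (\<gamma> - 1) - (\<beta> * \<gamma> + \<sigma>2)))
             \<longrightarrow> integrable lborel (\<lambda>x. v x powr s)"
    and "p * (n - \<beta> * \<gamma>) / (\<gamma> - 1) - \<sigma>2 > n"
  shows "asym_equiv v (\<lambda>x. norm x powr (- ((n - \<beta> * \<gamma>) / (\<gamma> - 1))))"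
proof -
  define \<theta>s where "\<theta>s = (n - \<beta> * \<gamma>) / (\<gamma> - 1)"
  have g1: "\<gamma> - 1 > 0" using \<open>\<gamma> > 1\<close> by simp
  have nb: "n - \<beta> * \<gamma> > 0" using \<open>\<beta> * \<gamma> < n\<close> by simp
  have \<theta>s: "\<theta>s > 0" using g1 nb by (simp add: \<theta>s_def)
  have npos: "n > 0" using n3 by (simp add: n_def)
  from decaying obtain \<theta>1 \<theta>2 :: real where th: "\<theta>1 > 0" "\<theta>2 > 0" "asym_equiv v (\<lambda>x. norm x powr (-\<theta>2))"
    by (elim exE conjE)
  obtain cv Rv where cv: "cv > 0"
    and vb: "\<And>x. norm x \<ge> Rv \<Longrightarrow> 1 / cv \<le> v x / norm x powr (-\<theta>2) \<and> v x / norm x powr (-\<theta>2) \<le> cv"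
    using th(3) unfolding asym_equiv_def by blast
  have upos: "\<And>x. u x > 0" and vpos: "\<And>x. v x > 0" and uloc: "loc_integrable u"
    and eqv: "AE x in lborel. ennreal (v x) = ennreal (c2 x) * wolff \<beta> \<gamma> (\<lambda>y. norm y powr \<sigma>2 * u y powr p) x"
    using sol unfolding positive_solution_def by auto
  obtain M where M: "\<And>x. u x \<le> M" using bounded by blast
  \<comment> \<open>lower bound on theta2 from integrability\<close>
  have A: "\<theta>2 \<ge> \<theta>s"
  proof (rule ccontr)
    assume "\<not> \<theta>2 \<ge> \<theta>s"
    then have lt: "\<theta>2 < \<theta>s" by simp
    define A0 where "A0 = n * (\<gamma> - 1) / (n - \<beta> * \<gamma>)"
    have A0: "A0 = n / \<theta>s" using g1 nb by (simp add: A0_def \<theta>s_def)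
    define D where "D = p * (n - \<beta> * \<gamma>) / (\<gamma> - 1) - (\<beta> * \<gamma> + \<sigma>2)"
    have D: "D > n - \<beta> * \<gamma>" using \<open>p * (n - \<beta> * \<gamma>) / (\<gamma> - 1) - \<sigma>2 > n\<close> by (simp add: D_def)
    have B: "n * (\<gamma> - 1) / D \<le> A0" unfolding A0_def
      using D nb g1 npos by (intro divide_left_mono) (auto intro: mult_pos_pos)
    define s where "s = (n / \<theta>s + n / \<theta>2) / 2"
    have "n / \<theta>s < n / \<theta>2" using lt th(2) npos by (intro divide_strict_left_mono) auto
    moreover have mid: "\<And>a b::real. a < b \<Longrightarrow> a < (a + b) / 2 \<and> (a + b) / 2 < b" by simp
    ultimately have s1: "s > A0" and s2: "s < n / \<theta>2" unfolding s_def A0 by blast+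
    have "A0 > 0" unfolding A0 using npos \<theta>s by simp
    then have spos: "s > 0" using s1 by linarith
    have "s > max A0 (n * (\<gamma> - 1) / D)" using s1 B by simp
    then have int: "integrable lborel (\<lambda>x. v x powr s)"
      using opt_int(2) unfolding A0_def D_def by blast
    have "\<theta>2 * s \<ge> real CARD('n)"
    proof (rule decay_integrable[OF vpos cv _ th(2) spos int])
      fix x :: "real^'n" assume "norm x \<ge> Rv"
      then show "1 / cv \<le> v x / norm x powr (- \<theta>2)" using vb by blast
    qed
    moreover have "\<theta>2 * s < n" using s2 th(2) by (simp add: field_simps)
    ultimately show False by (simp add: n_def)
  qed
  \<comment> \<open>upper bound on theta2 from the Wolff potential\<close>
  have B: "\<theta>2 \<le> \<theta>s"
  proof (rule ccontr)
    assume "\<not> \<theta>2 \<le> \<theta>s"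
    then have gt: "\<theta>2 > \<theta>s" by simp
    define f where "f = (\<lambda>y::real^'n. norm y powr \<sigma>2 * u y powr p)"
    have um: "u \<in> borel_measurable lborel"
      using uloc unfolding loc_integrable_def by (rule measurable_from_loc)
    have f0: "\<And>y. f y \<ge> 0" by (simp add: f_def)
    have fpos: "f y > 0" if "y \<noteq> 0" for y
    proof -
      have "u y \<noteq> 0" using upos[of y] by simp
      then show ?thesis using that by (simp add: f_def)
    qed
    have fint: "\<And>x t. set_integrable lborel (ball x t) f"
      unfolding f_def
      by (rule powr_integrable_ball[OF um upos M \<open>p > 0\<close>])
        (use \<open>\<sigma>2 > - (\<beta> * \<gamma>)\<close> \<open>\<beta> * \<gamma> < n\<close> in \<open>simp add: n_def\<close>)
    obtain K where K: "K > 0"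
      and Wl: "\<And>x. ennreal (K * (norm x + 1) powr (- \<theta>s)) \<le> wolff \<beta> \<gamma> f x"
      using wolff_lower[OF f0 fpos fint \<open>\<gamma> > 1\<close>] \<open>\<beta> * \<gamma> < n\<close>
      unfolding \<theta>s_def n_def by blast
    obtain C2 where C2: "C2 > 0" "\<And>x. 1 / C2 \<le> c2 x"
      using \<open>double_bounded c2\<close> unfolding double_bounded_def by blast
    define B0 where "B0 = cv * C2 * 2 powr \<theta>s / K"
    define R2 where "R2 = max (max Rv 1) ((\<bar>B0\<bar> + 1) powr (1 / (\<theta>2 - \<theta>s)))"
    define S where "S = {x::real^'n. R2 \<le> norm x}"
    have Ssets: "S \<in> sets lborel" unfolding S_def sets_lborel
      by (intro borel_closed closed_Collect_le continuous_intros)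
    have "emeasure lborel S \<noteq> 0"
    proof -
      obtain i :: 'n where True by simp
      define z where "z = (R2 + 1) *\<^sub>R (axis i 1 :: real^'n)"
      have R2: "R2 \<ge> 1" by (simp add: R2_def)
      have nz: "norm z = R2 + 1" using R2 by (simp add: z_def norm_axis_1)
      have "ball z 1 \<subseteq> S"
      proof
        fix x assume "x \<in> ball z 1"
        then have "norm (z - x) < 1" by (simp add: dist_norm)
        then show "x \<in> S" using norm_triangle_ineq2[of z x] nz
          by (simp add: S_def norm_minus_commute)
      qed
      then have "emeasure lborel (ball z 1) \<le> emeasure lborel S"
        by (rule emeasure_mono) (rule Ssets)
      moreover have "emeasure lborel (ball z 1) \<noteq> 0"
      proof -
        have V: "unit_ball_vol (real CARD('n)) \<noteq> 0"
          by (metis less_irrefl of_nat_0_le_iff unit_ball_vol_pos)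
        show ?thesis by (simp add: emeasure_ball V)
      qed
      ultimately show ?thesis by (metis le_zero_eq)
    qed
    from ae_exists[OF eqv Ssets this] obtain x where x: "x \<in> S"
      and ex: "ennreal (v x) = ennreal (c2 x) * wolff \<beta> \<gamma> f x" unfolding f_def by blast
    have nx: "norm x \<ge> R2" using x by (simp add: S_def)
    then have nx1: "norm x \<ge> 1" "norm x \<ge> Rv" by (auto simp: R2_def)
    have x0: "x \<noteq> 0" using nx1(1) by (metis norm_zero not_one_le_zero)
    have c2pos: "c2 x > 0" using C2(2)[of x] C2(1) by (meson divide_pos_pos less_le_trans zero_less_one)
    have "ennreal (1 / C2 * (K * (norm x + 1) powr (- \<theta>s))) \<le> ennreal (c2 x) * wolff \<beta> \<gamma> f x"
      using C2 K c2pos by (subst ennreal_mult) (auto intro!: mult_mono Wl simp: ennreal_le_iff)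
    then have vl: "1 / C2 * (K * (norm x + 1) powr (- \<theta>s)) \<le> v x"
    proof -
      have "ennreal (1 / C2 * (K * (norm x + 1) powr (- \<theta>s))) \<le> ennreal (v x)"
        using \<open>ennreal (1 / C2 * _) \<le> _\<close> ex by simp
      then show ?thesis using vpos[of x] ennreal_le_iff less_imp_le by blast
    qed
    have "(2 * norm x) powr (- \<theta>s) \<le> (norm x + 1) powr (- \<theta>s)"
      using nx1 \<theta>s by (intro powr_mono2') auto
    then have "2 powr (- \<theta>s) * norm x powr (- \<theta>s) \<le> (norm x + 1) powr (- \<theta>s)"
      using nx1 by (simp add: powr_mult)
    then have "K / C2 * (2 powr (- \<theta>s) * norm x powr (- \<theta>s)) \<le> K / C2 * (norm x + 1) powr (- \<theta>s)"
      using K C2 by (intro mult_left_mono) auto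
    then have "K / C2 * 2 powr (- \<theta>s) * norm x powr (- \<theta>s) \<le> v x"
      using vl by (simp add: algebra_simps)
    moreover have "v x \<le> cv * norm x powr (- \<theta>2)"
    proof -
      have pp: "norm x powr (- \<theta>2) > 0" using x0 by simp
      have "v x / norm x powr (- \<theta>2) \<le> cv" using vb[OF nx1(2)] by blast
      then show ?thesis using pp by (simp add: pos_divide_le_eq mult.commute)
    qed
    ultimately have ineq: "K / C2 * 2 powr (- \<theta>s) * norm x powr (- \<theta>s) \<le> cv * norm x powr (- \<theta>2)"
      by linarith
    have "norm x powr (\<theta>2 - \<theta>s) \<le> B0"
    proof -
      have pxx: "norm x powr (- \<theta>2) * norm x powr (\<theta>2 - \<theta>s) = norm x powr (- \<theta>s)"
        using nx1 by (simp add: powr_add[symmetric])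
      have "K / C2 * 2 powr (- \<theta>s) * norm x powr (\<theta>2 - \<theta>s) \<le> cv"
      proof -
        have "(K / C2 * 2 powr (- \<theta>s) * norm x powr (\<theta>2 - \<theta>s)) * norm x powr (- \<theta>2)
              \<le> cv * norm x powr (- \<theta>2)"
        proof -
          from ineq have "K / C2 * 2 powr (- \<theta>s) * (norm x powr (- \<theta>2) * norm x powr (\<theta>2 - \<theta>s))
              \<le> cv * norm x powr (- \<theta>2)" unfolding pxx .
          then show ?thesis by (simp add: mult_ac)
        qed
        moreover have "norm x powr (- \<theta>2) > 0" using x0 by simp
        ultimately show ?thesis by (rule mult_right_le_imp_le)
      qed
      then show ?thesis using K C2 by (simp add: B0_def powr_minus field_simps)
    qed
    moreover have "norm x powr (\<theta>2 - \<theta>s) \<ge> \<bar>B0\<bar> + 1"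
    proof -
      have "norm x powr (\<theta>2 - \<theta>s) \<ge> ((\<bar>B0\<bar> + 1) powr (1 / (\<theta>2 - \<theta>s))) powr (\<theta>2 - \<theta>s)"
        using nx gt by (intro powr_mono2) (auto simp: R2_def)
      also have "((\<bar>B0\<bar> + 1) powr (1 / (\<theta>2 - \<theta>s))) powr (\<theta>2 - \<theta>s) = \<bar>B0\<bar> + 1"
        using gt by (simp add: powr_powr)
      finally show ?thesis .
    qed
    ultimately show False by simp
  qed
  have "\<theta>2 = \<theta>s" using A B by simp
  then show ?thesis using th(3) unfolding \<theta>s_def by simp
qed

end
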